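(* Let $X$ be a transitive subshift whose language $\mathcal L$ has eventually constant growth with rate $K$, and let $x\in X$. Then either $\mathcal L$ is periodic, or there is $N$ such that for all $n\ge N$, all $j\in\mathbb N$ and both $\mathfrak s=\ell$ and $\mathfrak s=r$, the word $x_{[j,j+(K+2)n-2]}$ contains some $\mathfrak s$-special word $w\in\mathcal L_n$ as a subword.
   Context: A subshift is a nonempty closed $X\subseteq\mathcal A^{\mathbb N}$ ($\mathcal A$ finite) with $SX=X$ for the left shift $(Sx)_i=x_{i+1}$; transitive means for all nonempty open $U,V\subseteq X$ some $S^n(U)\cap V\ne\emptyset$. $\mathcal L$ is the set of finite nonempty words occurring in points of $X$, $\mathcal L_n$ those of length $n$, $p(n)=|\mathcal L_n|$, and $x_{[i,j]}=x_i\cdots x_j$. Eventually constant growth with rate $K$: there are $N_0,C$ with $p(n)=Kn+C$ for all $n\ge N_0$. Periodic: there is $P$ with $w_i=w_{i+P}$ for all $w\in\mathcal L$, $1\le i\le |w|-P$. $w$ is $\ell$-special if $|\{a:aw\in\mathcal L\}|\ge 2$, $r$-special if $|\{b:wb\in\mathcal L\}|\ge2$. *)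

theory Defs
  imports Main "HOL-Library.Sublist"
begin

text \<open>The topology on A^N is the product of discrete topologies; its basic open sets
  are cylinders.\<close>

definition cyl :: "(nat \<Rightarrow> 'a) set \<Rightarrow> (nat \<Rightarrow> 'a) \<Rightarrow> nat \<Rightarrow> (nat \<Rightarrow> 'a) set" where
  "cyl X x m = {y \<in> X. \<forall>i<m. y i = x i}"

definition open_in_X :: "(nat \<Rightarrow> 'a) set \<Rightarrow> (nat \<Rightarrow> 'a) set \<Rightarrow> bool" where
  "open_in_X X U \<longleftrightarrow> U \<subseteq> X \<and> (\<forall>x\<in>U. \<exists>m. cyl X x m \<subseteq> U)"

text \<open>Closedness in the product topology: a point all of whose prefixes
  occur as prefixes of points of X lies in X.\<close>
definition closed_seq :: "(nat \<Rightarrow> 'a) set \<Rightarrow> bool" where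
  "closed_seq X \<longleftrightarrow> (\<forall>x. (\<forall>m. \<exists>y\<in>X. \<forall>i<m. y i = x i) \<longrightarrow> x \<in> X)"

definition shift :: "(nat \<Rightarrow> 'a) \<Rightarrow> (nat \<Rightarrow> 'a)" where
  "shift x = (\<lambda>i. x (Suc i))"

definition subshift :: "(nat \<Rightarrow> 'a::finite) set \<Rightarrow> bool" where
  "subshift X \<longleftrightarrow> X \<noteq> {} \<and> closed_seq X \<and> shift ` X = X"

definition transitive_shift :: "(nat \<Rightarrow> 'a) set \<Rightarrow> bool" where
  "transitive_shift X \<longleftrightarrow>
     (\<forall>U V. open_in_X X U \<longrightarrow> open_in_X X V \<longrightarrow> U \<noteq> {} \<longrightarrow> V \<noteq> {} \<longrightarrow>
        (\<exists>n. (shift ^^ n) ` U \<inter> V \<noteq> {}))"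

text \<open>x_[i,j] as a list (zero-based indices).\<close>
definition factor :: "(nat \<Rightarrow> 'a) \<Rightarrow> nat \<Rightarrow> nat \<Rightarrow> 'a list" where
  "factor x i j = map x [i..<Suc j]"

definition lang :: "(nat \<Rightarrow> 'a) set \<Rightarrow> 'a list set" where
  "lang X = {w. w \<noteq> [] \<and> (\<exists>x\<in>X. \<exists>i. w = map x [i..<i + length w])}"

definition lang_n :: "(nat \<Rightarrow> 'a) set \<Rightarrow> nat \<Rightarrow> 'a list set" where
  "lang_n X n = {w \<in> lang X. length w = n}"

definition complexity :: "(nat \<Rightarrow> 'a) set \<Rightarrow> nat \<Rightarrow> nat" where
  "complexity X n = card (lang_n X n)"

definition eventually_constant_growth :: "(nat \<Rightarrow> 'a) set \<Rightarrow> nat \<Rightarrow> bool" where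
  "eventually_constant_growth X K \<longleftrightarrow>
     (\<exists>N0 (C::int). \<forall>n\<ge>N0. int (complexity X n) = int K * int n + C)"

definition periodic_lang :: "'a list set \<Rightarrow> bool" where
  "periodic_lang L \<longleftrightarrow> (\<exists>P>0. \<forall>w\<in>L. \<forall>i. i + P < length w \<longrightarrow> w ! i = w ! (i + P))"

definition l_special :: "'a list set \<Rightarrow> 'a list \<Rightarrow> bool" where
  "l_special L w \<longleftrightarrow> card {a. a # w \<in> L} \<ge> 2"

definition r_special :: "'a list set \<Rightarrow> 'a list \<Rightarrow> bool" where
  "r_special L w \<longleftrightarrow> card {b. w @ [b] \<in> L} \<ge> 2"

end

theory Submission
  imports Defs
begin

definition lpred :: "'a list set \<Rightarrow> 'a list \<Rightarrow> 'a list" where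
  "lpred L v = (SOME a. a # v \<in> L) # butlast v"

lemma sublist_take_drop: "sublist (take m (drop k Y)) Y"
  by (meson sublist_drop sublist_take sublist_order.order.trans)

lemma lpred_eq:
  fixes L :: "'a::finite list set"
  assumes "\<not> l_special L v" "a # v \<in> L" shows "lpred L v = a # butlast v"
proof -
  have uniq: "b = a" if "b # v \<in> L" for b
  proof (rule ccontr)
    assume "b \<noteq> a"
    have "{a, b} \<subseteq> {a. a # v \<in> L}" using assms that by auto
    hence "card {a, b} \<le> card {a. a # v \<in> L}" by (intro card_mono) auto
    with \<open>b \<noteq> a\<close> have "l_special L v" unfolding l_special_def by simp
    with assms show False by simp
  qed
  have "(SOME a. a # v \<in> L) # v \<in> L" using assms(2) by (rule someI)
  hence "(SOME a. a # v \<in> L) = a" using uniq by blast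
  thus ?thesis unfolding lpred_def by simp
qed

lemma fstep:
  fixes L :: "'a::finite list set"
  assumes Y: "Y \<in> L" and A2: "\<forall>w\<in>L. \<forall>u. sublist u w \<and> u \<noteq> [] \<longrightarrow> u \<in> L"
    and len: "k + 1 + n \<le> length Y" and ns: "\<not> l_special L (take n (drop (Suc k) Y))"
    and n: "n \<ge> 1"
  shows "lpred L (take n (drop (Suc k) Y)) = take n (drop k Y)"
proof -
  have dk: "drop k Y = Y ! k # drop (Suc k) Y" using len by (simp add: Cons_nth_drop_Suc)
  have "take (Suc n) (drop k Y) = Y ! k # take n (drop (Suc k) Y)" using dk by simp
  moreover have "take (Suc n) (drop k Y) \<in> L"
    using A2 Y sublist_take_drop[of "Suc n" k Y] len by (auto simp: dk)
  ultimately have "Y ! k # take n (drop (Suc k) Y) \<in> L" by simp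
  from lpred_eq[OF ns this] have "lpred L (take n (drop (Suc k) Y)) =
      Y ! k # butlast (take n (drop (Suc k) Y))" .
  also have "\<dots> = Y ! k # take (n - 1) (drop (Suc k) Y)"
    using len by (subst butlast_take) auto
  also have "\<dots> = take n (drop k Y)" using n dk
    by (cases n) auto
  finally show ?thesis .
qed

lemma core:
  fixes L :: "'a::finite list set"
  assumes A2: "\<forall>w\<in>L. \<forall>u. sublist u w \<and> u \<noteq> [] \<longrightarrow> u \<in> L"
    and A4: "\<forall>w\<in>L. \<forall>m. \<exists>z. length z = m \<and> w @ z \<in> L"
    and A5: "\<forall>u\<in>L. \<forall>v\<in>L. \<exists>z. u @ z @ v \<in> L"
    and W: "W \<in> L" and n: "n \<ge> 1"
    and lenW: "length W \<ge> n + card {w\<in>L. length w = n}"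
    and ns: "\<forall>u. sublist u W \<and> length u = n \<longrightarrow> \<not> l_special L u"
  shows "periodic_lang L"
proof -
  define Ln where "Ln = {w\<in>L. length w = n}"
  define c where "c = card Ln"
  define F where "F = (\<lambda>k. take n (drop k W))"
  have finLn: "finite Ln"
  proof -
    have "Ln \<subseteq> {xs. set xs \<subseteq> UNIV \<and> length xs = n}" unfolding Ln_def by auto
    moreover have "finite {xs. set xs \<subseteq> (UNIV::'a set) \<and> length xs = n}"
      by (rule finite_lists_length_eq) simp
    ultimately show ?thesis by (rule finite_subset)
  qed
  have FL: "F k \<in> Ln" if "k \<le> c" for k
  proof -
    have "length (F k) = n" using lenW that unfolding F_def c_def Ln_def by auto
    moreover have "F k \<in> L" using A2 W sublist_take_drop[of n k W] \<open>length (F k) = n\<close> n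
      unfolding F_def by auto
    ultimately show ?thesis unfolding Ln_def by simp
  qed
  have Fns: "\<not> l_special L (F k)" if "k \<le> c" for k
    using ns FL[OF that] sublist_take_drop[of n k W] unfolding F_def Ln_def by auto
  have "card (F ` {0..c}) \<le> card Ln"
    using FL finLn by (intro card_mono) auto
  hence "card (F ` {0..c}) < card {0..c}" unfolding c_def by simp
  hence "\<not> inj_on F {0..c}" by (rule pigeonhole)
  then obtain s t where st: "s < t" "t \<le> c" "F s = F t"
    unfolding inj_on_def by (metis atLeastAtMost_iff linorder_neqE_nat order.strict_trans2 le_eq_less_or_eq)
  define P where "P = t - s"
  have P0: "P > 0" using st unfolding P_def by simp
  have predstep: "lpred L (F k) = F (k - 1)" if "s < k" "k \<le> t" for k
  proof -
    have "lpred L (take n (drop (Suc (k-1)) W)) = take n (drop (k-1) W)"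
      by (rule fstep[OF W A2]) (use that st lenW Fns[of k] n in \<open>auto simp: F_def c_def Ln_def\<close>)
    thus ?thesis using that unfolding F_def by simp
  qed
  define G where "G = F ` {s..t}"
  have Gns: "\<not> l_special L g" if "g \<in> G" for g
    using that st Fns unfolding G_def by auto
  have Gcl: "lpred L g \<in> G" if "g \<in> G" for g
  proof -
    obtain k where k: "s \<le> k" "k \<le> t" "g = F k" using \<open>g \<in> G\<close> unfolding G_def by auto
    show ?thesis
    proof (cases "k = s")
      case True
      hence "lpred L g = F (t - 1)" using predstep[of t] st k by simp
      thus ?thesis using st unfolding G_def by auto
    next
      case False
      hence "lpred L g = F (k - 1)" using predstep[of k] k by simp
      moreover have "k - 1 \<in> {s..t}" using k False by auto
      ultimately show ?thesis unfolding G_def by auto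
    qed
  qed
  have allG: "v \<in> G" if "v \<in> L" "length v = n" for v
  proof -
    have "F s \<in> L" using FL st unfolding Ln_def by auto
    then obtain z where Yz: "v @ z @ F s \<in> L" using A5 \<open>v \<in> L\<close> by blast
    define Y where "Y = v @ z @ F s"
    have lFs: "length (F s) = n" using FL st unfolding Ln_def by auto
    define M where "M = length Y - n"
    have lY: "length Y = M + n" unfolding M_def Y_def using lFs by simp
    have "take n (drop (M - d) Y) \<in> G" if "d \<le> M" for d
      using that
    proof (induction d)
      case 0
      have "drop M Y = F s" unfolding M_def Y_def using lFs by simp
      thus ?case using lFs st unfolding G_def by auto
    next
      case (Suc d)
      have IH: "take n (drop (M - d) Y) \<in> G" using Suc by simp
      have eq: "Suc (M - Suc d) = M - d" using Suc by simp
      have "lpred L (take n (drop (Suc (M - Suc d)) Y)) = take n (drop (M - Suc d) Y)"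
        by (rule fstep) (use Yz Y_def A2 lY Suc.prems Gns[OF IH] n eq in auto)
      with Gcl[OF IH] eq show ?case by simp
    qed
    from this[of M] have "take n Y \<in> G" by simp
    thus ?thesis unfolding Y_def using \<open>length v = n\<close> by simp
  qed
  have bkF: "(lpred L ^^ d) (F k) = F (k - d)" if "s \<le> k" "k \<le> t" "d \<le> k - s" for k d
    using that(3)
  proof (induction d)
    case 0 thus ?case by simp
  next
    case (Suc d)
    have "(lpred L ^^ Suc d) (F k) = lpred L (F (k - d))" using Suc by simp
    also have "\<dots> = F (k - d - 1)" using Suc that by (intro predstep) auto
    finally show ?case by simp
  qed
  have cyc: "(lpred L ^^ P) g = g" if "g \<in> G" for g
  proof -
    obtain k where k: "s \<le> k" "k \<le> t" "g = F k" using \<open>g \<in> G\<close> unfolding G_def by auto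
    have "P = (t - k) + (k - s)" unfolding P_def using k by simp
    hence "(lpred L ^^ P) g = (lpred L ^^ (t - k)) ((lpred L ^^ (k - s)) (F k))"
      by (simp only: funpow_add o_apply k(3))
    also have "(lpred L ^^ (k - s)) (F k) = F t" using bkF[of k "k - s"] k st by simp
    also have "(lpred L ^^ (t - k)) (F t) = F k" using bkF[of t "t - k"] k st by simp
    finally show ?thesis using k by simp
  qed
  show ?thesis unfolding periodic_lang_def
  proof (intro exI[of _ P] conjI P0 ballI allI impI)
    fix w i assume w: "w \<in> L" and i: "i + P < length w"
    obtain z where z: "length z = n" "w @ z \<in> L" using A4 w by blast
    define Y where "Y = w @ z"
    define FY where "FY = (\<lambda>q. take n (drop q Y))"
    have FYG: "FY q \<in> G" if "q + n \<le> length Y" for q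
    proof -
      have "length (FY q) = n" using that unfolding FY_def by simp
      moreover have "FY q \<noteq> []" using \<open>length (FY q) = n\<close> n by auto
      moreover have "Y \<in> L" using z(2) unfolding Y_def .
      ultimately have "FY q \<in> L" using A2 sublist_take_drop[of n q Y] unfolding FY_def by blast
      thus ?thesis using allG \<open>length (FY q) = n\<close> by simp
    qed
    have bk: "(lpred L ^^ d) (FY (q + d)) = FY q" if "q + d + n \<le> length Y" for d q
      using that
    proof (induction d arbitrary: q)
      case 0 thus ?case by simp
    next
      case (Suc d)
      have "(lpred L ^^ Suc d) (FY (q + Suc d)) = lpred L ((lpred L ^^ d) (FY (Suc q + d)))"
        by simp
      also have "\<dots> = lpred L (FY (Suc q))" using Suc.IH[of "Suc q"] Suc.prems by simp
      also have "\<dots> = FY q" unfolding FY_def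
        by (rule fstep) (use z Y_def A2 Suc.prems Gns[OF FYG[of "Suc q"]] n in \<open>auto simp: FY_def\<close>)
      finally show ?case .
    qed
    have lenY: "length Y = length w + n" using z unfolding Y_def by simp
    have "FY i = (lpred L ^^ P) (FY (i + P))" using bk[of i P] i lenY by simp
    also have "\<dots> = FY (i + P)" using cyc FYG i lenY by simp
    finally have "FY i ! 0 = FY (i + P) ! 0" by simp
    moreover have "FY q ! 0 = Y ! q" if "q < length w" for q
      using that n lenY unfolding FY_def by simp
    ultimately have "Y ! i = Y ! (i + P)" using i by simp
    thus "w ! i = w ! (i + P)" using i unfolding Y_def by (simp add: nth_append)
  qed
qed

lemma in_rev_image: "x \<in> rev ` L \<longleftrightarrow> rev x \<in> L"
  by (metis image_iff rev_rev_ident)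

lemma core_r:
  fixes L :: "'a::finite list set"
  assumes A2: "\<forall>w\<in>L. \<forall>u. sublist u w \<and> u \<noteq> [] \<longrightarrow> u \<in> L"
    and A3: "\<forall>w\<in>L. \<forall>m. \<exists>z. length z = m \<and> z @ w \<in> L"
    and A5: "\<forall>u\<in>L. \<forall>v\<in>L. \<exists>z. u @ z @ v \<in> L"
    and W: "W \<in> L" and n: "n \<ge> 1"
    and lenW: "length W \<ge> n + card {w\<in>L. length w = n}"
    and ns: "\<forall>u. sublist u W \<and> length u = n \<longrightarrow> \<not> r_special L u"
  shows "periodic_lang L"
proof -
  define R where "R = rev ` L"
  have R2: "\<forall>w\<in>R. \<forall>u. sublist u w \<and> u \<noteq> [] \<longrightarrow> u \<in> R"
  proof (intro ballI allI impI)
    fix w u assume "w \<in> R" "sublist u w \<and> u \<noteq> []"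
    hence "rev w \<in> L" "sublist (rev u) (rev w)" "rev u \<noteq> []"
      unfolding R_def in_rev_image by (auto simp: sublist_rev)
    hence "rev u \<in> L" using A2 by blast
    thus "u \<in> R" unfolding R_def in_rev_image .
  qed
  have R4: "\<forall>w\<in>R. \<forall>m. \<exists>z. length z = m \<and> w @ z \<in> R"
  proof (intro ballI allI)
    fix w m assume "w \<in> R"
    hence "rev w \<in> L" unfolding R_def in_rev_image .
    then obtain z where "length z = m" "z @ rev w \<in> L" using A3 by blast
    thus "\<exists>z. length z = m \<and> w @ z \<in> R"
      by (intro exI[of _ "rev z"]) (simp add: R_def in_rev_image)
  qed
  have R5: "\<forall>u\<in>R. \<forall>v\<in>R. \<exists>z. u @ z @ v \<in> R"
  proof (intro ballI)
    fix u v assume "u \<in> R" "v \<in> R"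
    hence "rev u \<in> L" "rev v \<in> L" unfolding R_def in_rev_image by auto
    then obtain z where "rev v @ z @ rev u \<in> L" using A5 by blast
    thus "\<exists>z. u @ z @ v \<in> R"
      by (intro exI[of _ "rev z"]) (simp add: R_def in_rev_image)
  qed
  have "{w\<in>R. length w = n} = rev ` {w\<in>L. length w = n}"
    unfolding R_def by auto
  hence cardeq: "card {w\<in>R. length w = n} = card {w\<in>L. length w = n}"
    by (simp add: card_image)
  have lsp: "l_special R u \<longleftrightarrow> r_special L (rev u)" for u
  proof -
    have "{a. a # u \<in> R} = {b. rev u @ [b] \<in> L}" unfolding R_def in_rev_image by simp
    thus ?thesis unfolding l_special_def r_special_def by simp
  qed
  have "periodic_lang R"
  proof (rule core[OF R2 R4 R5])
    show "rev W \<in> R" using W unfolding R_def by simp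
    show "n \<ge> 1" by fact
    show "n + card {w\<in>R. length w = n} \<le> length (rev W)" using lenW cardeq by simp
    show "\<forall>u. sublist u (rev W) \<and> length u = n \<longrightarrow> \<not> l_special R u"
      using ns by (auto simp: lsp sublist_rev_right)
  qed
  then obtain P where P: "P > 0" "\<forall>w\<in>R. \<forall>i. i + P < length w \<longrightarrow> w ! i = w ! (i + P)"
    unfolding periodic_lang_def by blast
  show ?thesis unfolding periodic_lang_def
  proof (intro exI[of _ P] conjI P(1) ballI allI impI)
    fix w i assume w: "w \<in> L" and i: "i + P < length w"
    have "rev w \<in> R" using w unfolding R_def by simp
    hence e: "rev w ! (length w - 1 - i - P) = rev w ! (length w - 1 - i - P + P)"
      using P(2) i by auto
    have "length w - 1 - i - P + P = length w - 1 - i" using i by simp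
    with e i show "w ! i = w ! (i + P)" by (simp add: rev_nth Suc_diff_Suc)
  qed
qed

lemma shift_pow: "(shift ^^ i) y = (\<lambda>k. y (k + i))"
  by (induction i arbitrary: y) (auto simp: shift_def funpow_Suc_right)

lemma shift_powX: assumes "subshift X" "y \<in> X" shows "(shift ^^ i) y \<in> X"
  using assms(2)
proof (induction i)
  case (Suc i)
  have "shift ((shift ^^ i) y) \<in> shift ` X" using Suc by auto
  thus ?case using assms(1) unfolding subshift_def by simp
qed simp

lemma lang_at0:
  assumes "subshift X" "w \<in> lang X" shows "\<exists>y\<in>X. \<forall>k<length w. y k = w ! k"
proof -
  obtain y i where y: "y \<in> X" "w = map y [i..<i + length w]" using assms(2) unfolding lang_def by auto
  show ?thesis
  proof (intro bexI[of _ "(shift ^^ i) y"] allI impI)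
    fix k assume "k < length w"
    from y(2) have "w ! k = map y [i..<i + length w] ! k" by (rule arg_cong)
    also have "\<dots> = y (i + k)" using \<open>k < length w\<close> by simp
    finally show "(shift ^^ i) y k = w ! k" by (simp add: shift_pow add.commute)
  qed (rule shift_powX[OF assms(1) y(1)])
qed

lemma map_split: "map f [i..<i + (a + b)] = map f [i..<i + a] @ map f [i + a..<i + a + b]"
  by (metis upt_add_eq_append le_add1 map_append add.assoc)

lemma lang_map: "y \<in> X \<Longrightarrow> l > 0 \<Longrightarrow> map y [i..<i + l] \<in> lang X"
  unfolding lang_def by auto

lemma L2: "\<forall>w\<in>lang X. \<forall>u. sublist u w \<and> u \<noteq> [] \<longrightarrow> u \<in> lang X"
proof (intro ballI allI impI)
  fix w u assume w: "w \<in> lang X" and u: "sublist u w \<and> u \<noteq> []"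
  obtain y i where y: "y \<in> X" "w = map y [i..<i + length w]" using w unfolding lang_def by auto
  obtain p s where ps: "w = p @ u @ s" using u unfolding sublist_def by auto
  have "u = take (length u) (drop (length p) w)" using ps by simp
  also have "\<dots> = map y [i + length p..<i + length p + length u]"
    by (subst y(2)) (simp add: take_map drop_map ps)
  finally show "u \<in> lang X" using y(1) u lang_map[of y X "length u" "i + length p"] by auto
qed

lemma L3: assumes "subshift X" shows "\<forall>w\<in>lang X. \<forall>m. \<exists>z. length z = m \<and> z @ w \<in> lang X"
proof (intro ballI allI)
  fix w m assume w: "w \<in> lang X"
  obtain y i where y: "y \<in> X" "w = map y [i..<i + length w]" using w unfolding lang_def by auto
  have "\<exists>z\<in>X. \<forall>k. z (k + m) = y k"
  proof (induction m)
    case 0 show ?case using y(1) by auto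
  next
    case (Suc m)
    then obtain z where z: "z \<in> X" "\<forall>k. z (k + m) = y k" by blast
    then obtain z' where "z' \<in> X" "z = shift z'" using assms unfolding subshift_def by force
    thus ?case using z by (intro bexI[of _ z']) (auto simp: shift_def)
  qed
  then obtain z where z: "z \<in> X" "\<forall>k. z (k + m) = y k" by blast
  have "map z [i..<i + (m + length w)] = map z [i..<i + m] @ map z [i + m..<i + m + length w]"
    by (rule map_split)
  moreover have "map z [i + m..<i + m + length w] = w"
    by (subst y(2)) (auto intro!: nth_equalityI simp: z(2)[rule_format, symmetric] add.commute add.left_commute)
  ultimately have "map z [i..<i + m] @ w \<in> lang X"
    using lang_map[OF z(1), of "m + length w" i] w unfolding lang_def by auto
  thus "\<exists>z. length z = m \<and> z @ w \<in> lang X" by (intro exI[of _ "map z [i..<i + m]"]) simp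
qed

lemma L4: "\<forall>w\<in>lang X. \<forall>m. \<exists>z. length z = m \<and> w @ z \<in> lang X"
proof (intro ballI allI)
  fix w m assume w: "w \<in> lang X"
  obtain y i where y: "y \<in> X" "w = map y [i..<i + length w]" "w \<noteq> []" using w unfolding lang_def by auto
  have "map y [i..<i + (length w + m)] = w @ map y [i + length w..<i + length w + m]"
    using map_split[of y i "length w" m] y(2) by simp
  moreover have "map y [i..<i + (length w + m)] \<in> lang X" using lang_map[OF y(1)] y(3) by simp
  ultimately show "\<exists>z. length z = m \<and> w @ z \<in> lang X" by (intro exI[of _ "map y [i + length w..<i + length w + m]"]) simp
qed

lemma L5: assumes ss: "subshift X" and tr: "transitive_shift X"
  shows "\<forall>u\<in>lang X. \<forall>v\<in>lang X. \<exists>z. u @ z @ v \<in> lang X"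
proof (intro ballI)
  fix u v assume u: "u \<in> lang X" and v: "v \<in> lang X"
  define U where "U = {y\<in>X. \<forall>k<length u. y k = u ! k}"
  define V where "V = {y\<in>X. \<forall>k<length v. y (length u + k) = v ! k}"
  have oU: "open_in_X X U" unfolding open_in_X_def U_def cyl_def
    by (auto intro!: exI[of _ "length u"])
  have oV: "open_in_X X V" unfolding open_in_X_def V_def cyl_def
    by (auto intro!: exI[of _ "length u + length v"])
  have nU: "U \<noteq> {}" using lang_at0[OF ss u] unfolding U_def by auto
  obtain s where s: "length s = length u" "s @ v \<in> lang X" using L3[OF ss] v by blast
  obtain y where y: "y \<in> X" "\<forall>k<length (s @ v). y k = (s @ v) ! k" using lang_at0[OF ss s(2)] by blast
  have "y \<in> V" unfolding V_def using y s(1) by (auto simp: nth_append)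
  hence nV: "V \<noteq> {}" by auto
  obtain m where "(shift ^^ m) ` U \<inter> V \<noteq> {}" using tr oU oV nU nV unfolding transitive_shift_def by blast
  then obtain y where yU: "y \<in> U" and yV: "(shift ^^ m) y \<in> V" by blast
  have yv: "y (length u + k + m) = v ! k" if "k < length v" for k
    using yV that unfolding V_def by (auto simp: shift_pow)
  have "map y [0..<0 + (length u + (m + length v))] =
     map y [0..<0 + length u] @ map y [0 + length u..<0 + length u + (m + length v)]"
    by (rule map_split)
  also have "map y [0 + length u..<0 + length u + (m + length v)] =
     map y [length u..<length u + m] @ map y [length u + m..<length u + m + length v]"
    using map_split[of y "length u" m "length v"] by (simp add: add.assoc)
  also have "map y [0..<0 + length u] = u" using yU unfolding U_def
    by (auto intro!: nth_equalityI)
  also have "map y [length u + m..<length u + m + length v] = v"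
    using yv by (auto intro!: nth_equalityI simp: add.commute add.left_commute)
  finally have eq: "map y [0..<0 + (length u + (m + length v))] = u @ map y [length u..<length u + m] @ v" .
  have "map y [0..<0 + (length u + (m + length v))] \<in> lang X"
  proof (rule lang_map)
    show "y \<in> X" using yU unfolding U_def by simp
    show "0 < length u + (m + length v)" using u unfolding lang_def by auto
  qed
  thus "\<exists>z. u @ z @ v \<in> lang X" using eq by metis
qed

theorem mainTheorem8:
  fixes X :: "(nat \<Rightarrow> 'a::finite) set" and K :: nat and x :: "nat \<Rightarrow> 'a"
  assumes "subshift X" and "transitive_shift X"
    and "eventually_constant_growth X K"
    and "x \<in> X"
  shows "periodic_lang (lang X) \<or>
    (\<exists>N. \<forall>n\<ge>N. \<forall>j.
       (\<exists>w\<in>lang_n X n. l_special (lang X) w \<and> sublist w (factor x j (j + (K + 2) * n - 2))) \<and>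
       (\<exists>w\<in>lang_n X n. r_special (lang X) w \<and> sublist w (factor x j (j + (K + 2) * n - 2))))"
proof (cases "periodic_lang (lang X)")
  case True thus ?thesis by simp
next
  case False
  note np = False
  note A2 = L2[of X] and A3 = L3[OF assms(1)] and A4 = L4[of X] and A5 = L5[OF assms(1,2)]
  obtain N0 C where NC: "\<forall>n\<ge>N0. int (complexity X n) = int K * int n + C"
    using assms(3) unfolding eventually_constant_growth_def by blast
  have "\<exists>N. \<forall>n\<ge>N. \<forall>j.
       (\<exists>w\<in>lang_n X n. l_special (lang X) w \<and> sublist w (factor x j (j + (K + 2) * n - 2))) \<and>
       (\<exists>w\<in>lang_n X n. r_special (lang X) w \<and> sublist w (factor x j (j + (K + 2) * n - 2)))"
  proof (intro exI[of _ "N0 + nat C + 1"] allI impI)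
    fix n j assume nN: "N0 + nat C + 1 \<le> n"
    have n1: "n \<ge> 1" using nN by simp
    define W where "W = factor x j (j + (K + 2) * n - 2)"
    have ge2: "(K + 2) * n \<ge> 2" using n1 by (metis le_add2 mult_le_mono nat_mult_1_right)
    have lenW: "length W = (K + 2) * n - 1" unfolding W_def factor_def using ge2 by (simp; linarith)
    have "W = map x [j..<j + length W]" unfolding W_def factor_def using ge2 by simp
    hence WL: "W \<in> lang X" using lang_map[OF assms(4), of "length W" j] lenW ge2 by simp
    have "int (card {w \<in> lang X. length w = n}) = int K * int n + C"
      using NC nN unfolding complexity_def lang_n_def by simp
    moreover have "C \<le> int n - 1" using nN by linarith
    ultimately have "int (n + card {w \<in> lang X. length w = n}) \<le> int (length W)"
      using lenW ge2 by (simp add: algebra_simps of_nat_diff)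
    hence lenW': "n + card {w \<in> lang X. length w = n} \<le> length W" by linarith
    have subL: "u \<in> lang_n X n" if "sublist u W" "length u = n" for u
    proof -
      have "u \<noteq> []" using that n1 by auto
      hence "u \<in> lang X" using A2 WL that(1) by blast
      thus ?thesis unfolding lang_n_def using that(2) by simp
    qed
    show "(\<exists>w\<in>lang_n X n. l_special (lang X) w \<and> sublist w (factor x j (j + (K + 2) * n - 2))) \<and>
       (\<exists>w\<in>lang_n X n. r_special (lang X) w \<and> sublist w (factor x j (j + (K + 2) * n - 2)))"
      unfolding W_def[symmetric]
    proof (intro conjI; rule ccontr)
      assume "\<not> (\<exists>w\<in>lang_n X n. l_special (lang X) w \<and> sublist w W)"
      hence "\<forall>u. sublist u W \<and> length u = n \<longrightarrow> \<not> l_special (lang X) u" using subL by blast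
      hence "periodic_lang (lang X)" by (rule core[OF A2 A4 A5 WL n1 lenW'])
      with np show False by simp
    next
      assume "\<not> (\<exists>w\<in>lang_n X n. r_special (lang X) w \<and> sublist w W)"
      hence "\<forall>u. sublist u W \<and> length u = n \<longrightarrow> \<not> r_special (lang X) u" using subL by blast
      hence "periodic_lang (lang X)" by (rule core_r[OF A2 A3 A5 WL n1 lenW'])
      with np show False by simp
    qed
  qed
  thus ?thesis by simp
qed

end
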